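(* Consider Primal Online Balanced Descent with parameter $\beta>0$, $\ell_2$ norm $\|\cdot\|=\|\cdot\|_2$ and Euclidean projection, at round $t$, producing $x_t$ from $x_{t-1}$ and cost function $f_t$ with minimizer $v_t$. Let $x_t^*\in\mathcal{X}$ be a point with $H_t^*=f_t(x_t^* )<H_t=f_t(x_t)$, and suppose $f_t(x)\ge\alpha\|x-v_t\|$ for all $x$, where $\alpha>0$. Then $$\|x_t-x_t^*\|-\|x_t^*-x_{t-1}\|\le-\gamma\|x_t-x_{t-1}\|,\qquad\text{where }\gamma=\sqrt{1+\left(\tfrac{2}{\alpha\beta}\right)^2}-\tfrac{2}{\alpha\beta}.$$
   Context: Primal Online Balanced Descent with parameter $\beta>0$ (norm $\|\cdot\|$, mirror map $\Phi$; here $\Phi(x)=\frac12\|x\|_2^2$): given $x_{t-1}$ and convex $f_t$, let $v_t=\arg\min_x f_t(x)$; if $\|x_{t-1}-v_t\|<\beta f_t(v_t)$ set $x_t=v_t$; otherwise, with $K^l_t=\{x:f_t(x)\le l\}$ and $x(l)=\Pi^\Phi_{K^l_t}(x_{t-1})$, where $\Pi^\Phi_K(x)=\arg\min_{y\in K}D_\Phi(y,x)$ and $D_\Phi(x,y)=\Phi(x)-\Phi(y)-\nabla\Phi(y)^T(x-y)$, increase $l$ until $\|x(l)-x_{t-1}\|=\beta l$ and set $x_t=x(l)$. *)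

theory Defs
  imports "HOL-Analysis.Analysis"
begin

text \<open>Mirror map Phi(x) = 1/2 ||x||_2^2 and its Bregman divergence
  D_Phi(x,y) = Phi x - Phi y - grad Phi(y)^T (x - y), with grad Phi(y) = y.\<close>

definition Phi :: "'a::euclidean_space \<Rightarrow> real" where
  "Phi x = (1/2) * (norm x)^2"

definition bregman :: "'a::euclidean_space \<Rightarrow> 'a \<Rightarrow> real" where
  "bregman x y = Phi x - Phi y - inner y (x - y)"

definition is_bregman_proj :: "'a::euclidean_space set \<Rightarrow> 'a \<Rightarrow> 'a \<Rightarrow> bool" where
  "is_bregman_proj K x p \<longleftrightarrow> p \<in> K \<and> (\<forall>y\<in>K. bregman p x \<le> bregman y x)"

definition sublevel :: "('a \<Rightarrow> real) \<Rightarrow> real \<Rightarrow> 'a set" where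
  "sublevel f l = {x. f x \<le> l}"

text \<open>One round of Primal Online Balanced Descent: from x_{t-1} = xprev, cost f with
  minimiser v, the algorithm outputs x_t = xt.  "Increase l until ||x(l)-x_{t-1}|| = beta l"
  is rendered as: xt = x(l) for a level l at which this balance equation holds.\<close>
definition pobd_step :: "real \<Rightarrow> ('a::euclidean_space \<Rightarrow> real) \<Rightarrow> 'a \<Rightarrow> 'a \<Rightarrow> 'a \<Rightarrow> bool" where
  "pobd_step \<beta> f v xprev xt \<longleftrightarrow>
     (if norm (xprev - v) < \<beta> * f v then xt = v
      else (\<exists>l. is_bregman_proj (sublevel f l) xprev xt \<and> norm (xt - xprev) = \<beta> * l))"

end

theory Submission
  imports Defs
begin

lemma bregman_eq: "bregman y x = (1/2) * (norm (y - x))^2"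
  unfolding bregman_def Phi_def
  by (simp add: power2_norm_eq_inner inner_diff_left inner_diff_right inner_commute algebra_simps)

lemma key_ineq:
  fixes a b c :: real
  assumes "a \<ge> 0" "b \<ge> 0" "c \<ge> 0" "a \<le> c * b"
  shows "a + (sqrt (1 + c^2) - c) * b \<le> sqrt (a^2 + b^2)"
proof -
  define s where "s = sqrt (1 + c^2)"
  have s2: "s^2 = 1 + c^2" unfolding s_def by simp
  have sc: "s \<ge> c" unfolding s_def by (rule real_le_rsqrt) simp
  have s0: "s \<ge> 0" unfolding s_def by simp
  have g: "(s - c) * (2*c + (s - c)) = 1" using s2 by (simp add: algebra_simps power2_eq_square)
  have "2*a*(s-c)*b \<le> 2*c*b*(s-c)*b"
    using assms sc by (intro mult_right_mono) (auto intro: mult_left_mono)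
  hence "(a + (s - c) * b)^2 \<le> a^2 + b^2"
    using g by (simp add: power2_eq_square algebra_simps)
  moreover have "a + (s - c) * b \<ge> 0" using assms sc by simp
  ultimately show ?thesis unfolding s_def[symmetric] by (simp add: real_le_rsqrt)
qed

theorem lemma13:
  fixes f :: "'a::euclidean_space \<Rightarrow> real"
    and v xprev xt xstar :: 'a
    and \<alpha> \<beta> :: real
  assumes "\<beta> > 0" and "\<alpha> > 0"
    and "convex_on UNIV f"
    and "\<forall>x. f v \<le> f x"
    and "pobd_step \<beta> f v xprev xt"
    and "f xstar < f xt"
    and "\<forall>x. f x \<ge> \<alpha> * norm (x - v)"
  shows "norm (xt - xstar) - norm (xstar - xprev)
           \<le> - (sqrt (1 + (2 / (\<alpha> * \<beta>))^2) - 2 / (\<alpha> * \<beta>)) * norm (xt - xprev)"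
proof -
  have nv: "\<not> norm (xprev - v) < \<beta> * f v"
  proof
    assume "norm (xprev - v) < \<beta> * f v"
    then have "xt = v" using assms(5) unfolding pobd_step_def by simp
    then show False using assms(4,6) by (metis not_le)
  qed
  then obtain l where pr: "is_bregman_proj (sublevel f l) xprev xt"
      and nl: "norm (xt - xprev) = \<beta> * l"
    using assms(5) unfolding pobd_step_def by auto
  have fxt: "f xt \<le> l" using pr unfolding is_bregman_proj_def sublevel_def by auto
  have fxs: "f xstar \<le> l" using fxt assms(6) by simp
  define d where "d = xt - xprev"
  define u where "u = xstar - xt"
  have vi: "inner d u \<ge> 0"
  proof (rule ccontr)
    assume "\<not> ?thesis"
    hence p: "inner d u < 0" by simp
    hence u0: "u \<noteq> 0" by auto
    hence nu: "(norm u)^2 > 0" by simp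
    define s where "s = min 1 (- inner d u / (norm u)^2)"
    have s0: "s > 0" using p nu unfolding s_def by (simp add: field_simps)
    have s1: "s \<le> 1" unfolding s_def by simp
    have "s \<le> - inner d u / (norm u)^2" unfolding s_def by simp
    hence "s * (norm u)^2 \<le> (- inner d u / (norm u)^2) * (norm u)^2"
      using nu by (intro mult_right_mono) auto
    hence "s * (norm u)^2 \<le> - inner d u" using nu by simp
    define y where "y = xt + s *\<^sub>R u"
    have yc: "y = (1 - s) *\<^sub>R xt + s *\<^sub>R xstar" unfolding y_def u_def
      by (simp add: algebra_simps)
    have "f y \<le> (1 - s) * f xt + s * f xstar"
      unfolding yc using assms(3) s0 s1
      by (intro convex_onD[of UNIV]) auto
    also have "\<dots> \<le> (1 - s) * l + s * l"
      using s0 s1 fxt fxs by (intro add_mono mult_left_mono) auto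
    finally have "y \<in> sublevel f l" unfolding sublevel_def by (simp add: algebra_simps)
    hence "bregman xt xprev \<le> bregman y xprev" using pr unfolding is_bregman_proj_def by auto
    hence "(norm d)^2 \<le> (norm (d + s *\<^sub>R u))^2"
      unfolding bregman_eq d_def y_def by (simp add: algebra_simps)
    also have "\<dots> = (norm d)^2 + 2 * s * inner d u + s^2 * (norm u)^2"
      unfolding power2_norm_eq_inner by (simp add: inner_add_left inner_add_right inner_commute power2_eq_square algebra_simps)
    finally have "0 \<le> s * (2 * inner d u + s * (norm u)^2)"
      by (simp add: algebra_simps power2_eq_square)
    hence "0 \<le> 2 * inner d u + s * (norm u)^2" using s0
      by (simp add: zero_le_mult_iff)
    thus False using \<open>s * (norm u)^2 \<le> - inner d u\<close> p by linarith
  qed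
  have "(norm (xstar - xprev))^2 = (norm (u + d))^2" unfolding u_def d_def by (simp add: algebra_simps)
  also have "\<dots> = (norm u)^2 + (norm d)^2 + 2 * inner d u"
    by (simp add: power2_norm_eq_inner inner_add_left inner_add_right inner_commute)
  finally have sq: "sqrt ((norm u)^2 + (norm d)^2) \<le> norm (xstar - xprev)"
    using vi by (simp add: real_sqrt_le_iff real_le_lsqrt)
  have a1: "\<alpha> * norm (xstar - v) < l" using assms(7) fxs assms(6) fxt
    by (smt (verit))
  have a2: "\<alpha> * norm (xt - v) \<le> l" using assms(7) fxt by (smt (verit))
  have "norm u \<le> norm (xstar - v) + norm (xt - v)" unfolding u_def
    by (metis norm_diff_triangle_le norm_minus_commute order_refl)
  hence "\<alpha> * norm u \<le> 2 * l" using a1 a2 assms(2)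
    by (smt (verit) distrib_left mult_left_mono)
  hence au: "norm u \<le> (2 / (\<alpha> * \<beta>)) * norm d"
    unfolding d_def nl using assms(1,2) by (simp add: field_simps)
  have "norm u + (sqrt (1 + (2 / (\<alpha> * \<beta>))^2) - 2 / (\<alpha> * \<beta>)) * norm d
        \<le> sqrt ((norm u)^2 + (norm d)^2)"
    using au assms(1,2) by (intro key_ineq) auto
  with sq have "norm u + (sqrt (1 + (2 / (\<alpha> * \<beta>))^2) - 2 / (\<alpha> * \<beta>)) * norm d \<le> norm (xstar - xprev)"
    by linarith
  moreover have "norm (xt - xstar) = norm u" unfolding u_def by (simp add: norm_minus_commute)
  ultimately show ?thesis unfolding d_def by (simp add: algebra_simps)
qed

end
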